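(* Let $\ell_1,\ell_2,\ell_3,\ell_4$ be pairwise skew lines in $\mathbb{P}^3$ (over $\mathbb{C}$), and suppose that there is a unique line $\ell\subset\mathbb{P}^3$ that intersects all of $\ell_1,\ell_2,\ell_3,\ell_4$. Let $\pi\colon Y\to\mathbb{P}^3$ be the blow up of $\ell$, with exceptional divisor $E\cong\mathbb{P}^1\times\mathbb{P}^1$, and let $\tilde{\ell}_1,\ldots,\tilde{\ell}_4$ be the proper transforms on $Y$ of $\ell_1,\ldots,\ell_4$. Then there exists a unique curve $C\subset E$ of bi-degree $(1,1)$ that intersects each of $\tilde{\ell}_1,\tilde{\ell}_2,\tilde{\ell}_3,\tilde{\ell}_4$. *)

theory Defs
  imports "HOL-Analysis.Analysis"
begin

text \<open>Concrete model of projective 3-space over the complex numbers.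
  A point of P^3 is represented by any nonzero vector of complex^4 (all sets below
  are closed under nonzero rescaling of representatives). A line of P^3 is a
  2-dimensional complex linear subspace of complex^4.\<close>

definition pairing :: "complex^4 \<Rightarrow> complex^4 \<Rightarrow> complex" where
  "pairing w x = (\<Sum>i\<in>UNIV. w$i * x$i)"

definition cspan2 :: "complex^4 \<Rightarrow> complex^4 \<Rightarrow> (complex^4) set" where
  "cspan2 u v = {a *s u + b *s v | a b. True}"

definition is_line :: "(complex^4) set \<Rightarrow> bool" where
  "is_line L \<longleftrightarrow> (\<exists>u v. (\<forall>a b. a *s u + b *s v = 0 \<longrightarrow> a = 0 \<and> b = 0) \<and> L = cspan2 u v)"

text \<open>Two lines meet in P^3 iff their subspaces share a nonzero vector.\<close>
definition meets :: "(complex^4) set \<Rightarrow> (complex^4) set \<Rightarrow> bool" where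
  "meets L M \<longleftrightarrow> L \<inter> M \<noteq> {0}"

text \<open>Linear forms vanishing on a line; nonzero ones, up to scaling, are the planes
  containing the line.\<close>
definition ann :: "(complex^4) set \<Rightarrow> (complex^4) set" where
  "ann L = {w. \<forall>x\<in>L. pairing w x = 0}"

text \<open>Blow-up of P^3 along the line l: pairs (point x, plane ker w \<supseteq> l) with x in the plane.
  The projection is (x,w) \<mapsto> x.\<close>
definition blowup :: "(complex^4) set \<Rightarrow> ((complex^4) \<times> (complex^4)) set" where
  "blowup l = {(x, w). x \<noteq> 0 \<and> w \<noteq> 0 \<and> w \<in> ann l \<and> pairing w x = 0}"

text \<open>Exceptional divisor: preimage of l (isomorphic to l \<times> pencil of planes = P^1 \<times> P^1).\<close>
definition exc_div :: "(complex^4) set \<Rightarrow> ((complex^4) \<times> (complex^4)) set" where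
  "exc_div l = {p \<in> blowup l. fst p \<in> l}"

text \<open>Proper transform of a curve L: closure (classical topology, which agrees with the
  Zariski closure here) of the preimage of L minus l.\<close>
definition proper_transform ::
  "(complex^4) set \<Rightarrow> (complex^4) set \<Rightarrow> ((complex^4) \<times> (complex^4)) set" where
  "proper_transform l L = closure {p \<in> blowup l. fst p \<in> L - l} \<inter> blowup l"

text \<open>Curves of bidegree (1,1) on E: zero loci of a bilinear form on l \<times> ann l
  (bihomogeneous of degree (1,1) in the point of l and the plane through l),
  not identically zero.\<close>
definition curve11 :: "(complex^4) set \<Rightarrow> ((complex^4) \<times> (complex^4)) set \<Rightarrow> bool" where
  "curve11 l C \<longleftrightarrow> (\<exists>M :: complex^4^4.
      (\<exists>x\<in>l. \<exists>w\<in>ann l. pairing w (M *v x) \<noteq> 0) \<and>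
      C = {(x, w) \<in> exc_div l. pairing w (M *v x) = 0})"

end

theory Submission
  imports Defs
begin


lemma UNIV4: "distinct [i,j,k,m::4] \<Longrightarrow> UNIV = {i,j,k,m}"
proof -
  assume d: "distinct [i,j,k,m::4]"
  have "card {i,j,k,m} = 4" using d by simp
  moreover have "card (UNIV::4 set) = 4" by simp
  ultimately show ?thesis by (metis card_subset_eq finite subset_UNIV)
qed

lemma sum4: "distinct [i,j,k,m::4] \<Longrightarrow> (\<Sum>n\<in>UNIV. f n) = f i + f j + f k + f m"
  by (simp add: UNIV4 add.assoc)

lemma notin_small: "card (A::4 set) < 4 \<Longrightarrow> \<exists>k. k \<notin> A"
proof (rule ccontr)
  assume "card A < 4" "\<not> (\<exists>k. k \<notin> A)"
  then have "A = UNIV" by auto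
  with \<open>card A < 4\<close> show False by simp
qed

lemma other2: "(i::4) \<noteq> j \<Longrightarrow> \<exists>k m. distinct [i,j,k,m]"
proof -
  assume ij: "i \<noteq> j"
  have "card {i,j} < 4" using ij by simp
  then obtain k where k: "k \<notin> {i,j}" using notin_small by blast
  have "card {i,j,k} = 3" using ij k by (auto simp: card_insert_if)
  then have "card {i,j,k} < 4" by simp
  then obtain m where m: "m \<notin> {i,j,k}" using notin_small by blast
  show ?thesis using ij k m by auto
qed


locale frame =
  fixes a b c d ea eb ec ed :: "complex^4"
  assumes aa: "pairing ea a = 1" and ab: "pairing ea b = 0" and ac: "pairing ea c = 0" and ad: "pairing ea d = 0"
    and ba: "pairing eb a = 0" and bb: "pairing eb b = 1" and bc: "pairing eb c = 0" and bd: "pairing eb d = 0"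
    and ca: "pairing ec a = 0" and cb: "pairing ec b = 0" and cc: "pairing ec c = 1" and cd: "pairing ec d = 0"
    and da: "pairing ed a = 0" and db: "pairing ed b = 0" and dc: "pairing ed c = 0" and dd: "pairing ed d = 1"
    and expand: "\<And>z. z = pairing ea z *s a + pairing eb z *s b + pairing ec z *s c + pairing ed z *s d"

lemma frame_ijkm:
  fixes a b :: "complex^4"
  assumes dist: "distinct [i,j,k,m]" and D: "a$i * b$j - a$j * b$i \<noteq> 0"
  shows "\<exists>c d ea eb ec ed. frame a b c d ea eb ec ed"
proof -
  define D where "D = a$i * b$j - a$j * b$i"
  define ea :: "complex^4" where "ea = (\<chi> n. if n = i then b$j / D else if n = j then - b$i / D else 0)"
  define eb :: "complex^4" where "eb = (\<chi> n. if n = i then - a$j / D else if n = j then a$i / D else 0)"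
  define c :: "complex^4" where "c = (\<chi> n. if n = k then 1 else 0)"
  define d :: "complex^4" where "d = (\<chi> n. if n = m then 1 else 0)"
  define ec :: "complex^4" where "ec = (\<chi> n. (if n = k then 1 else 0) - a$k * ea$n - b$k * eb$n)"
  define ed :: "complex^4" where "ed = (\<chi> n. (if n = m then 1 else 0) - a$m * ea$n - b$m * eb$n)"
  have D0: "D \<noteq> 0" using D D_def by simp
  have ne: "i \<noteq> j" "i \<noteq> k" "i \<noteq> m" "j \<noteq> k" "j \<noteq> m" "k \<noteq> m" "j \<noteq> i" "k \<noteq> i" "m \<noteq> i" "k \<noteq> j" "m \<noteq> j" "m \<noteq> k"
    using dist by auto
  have P: "\<And>w z. pairing w z = w$i * z$i + w$j * z$j + w$k * z$k + w$m * z$m"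
    unfolding pairing_def by (rule sum4[OF dist])
  have "frame a b c d ea eb ec ed"
  proof
    show "pairing ea a = 1" "pairing ea b = 0" "pairing ea c = 0" "pairing ea d = 0"
         "pairing eb a = 0" "pairing eb b = 1" "pairing eb c = 0" "pairing eb d = 0"
         "pairing ec a = 0" "pairing ec b = 0" "pairing ec c = 1" "pairing ec d = 0"
         "pairing ed a = 0" "pairing ed b = 0" "pairing ed c = 0" "pairing ed d = 1"
      unfolding P ea_def eb_def ec_def ed_def c_def d_def using ne D0
      apply (simp_all add: field_simps)
      apply (simp_all add: D_def algebra_simps)
      done
  next
    fix z :: "complex^4"
    show "z = pairing ea z *s a + pairing eb z *s b + pairing ec z *s c + pairing ed z *s d"
      unfolding vec_eq_iff
    proof
      fix n
      have "n \<in> {i,j,k,m}" using UNIV4[OF dist] by auto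
      then show "z $ n = (pairing ea z *s a + pairing eb z *s b + pairing ec z *s c + pairing ed z *s d) $ n"
        unfolding P ea_def eb_def ec_def ed_def c_def d_def using ne D0
        apply (auto simp: field_simps)
        apply (simp_all add: D_def algebra_simps)
        done
    qed
  qed
  then show ?thesis by blast
qed

lemma frame_exists:
  fixes a b :: "complex^4"
  assumes ind: "\<forall>\<alpha> \<beta>. \<alpha> *s a + \<beta> *s b = 0 \<longrightarrow> \<alpha> = 0 \<and> \<beta> = 0"
  shows "\<exists>c d ea eb ec ed. frame a b c d ea eb ec ed"
proof -
  have "\<exists>i j. a$i * b$j - a$j * b$i \<noteq> 0"
  proof (rule ccontr)
    assume "\<not> ?thesis"
    then have M: "\<And>i j. a$i * b$j = a$j * b$i" by auto
    show False
    proof (cases "a = 0")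
      case True
      then show False using ind[rule_format, of 1 0] by simp
    next
      case False
      then obtain r where r: "a$r \<noteq> 0" by (auto simp: vec_eq_iff)
      have "(- b$r) *s a + (a$r) *s b = 0"
        by (auto simp: vec_eq_iff M algebra_simps)
      then show False using ind r by blast
    qed
  qed
  then obtain i j where D: "a$i * b$j - a$j * b$i \<noteq> 0" by blast
  then have "i \<noteq> j" by auto
  then obtain k m where "distinct [i,j,k,m]" using other2 by blast
  then show ?thesis using frame_ijkm D by blast
qed



definition indep :: "complex^4 \<Rightarrow> complex^4 \<Rightarrow> bool" where
  "indep u v \<longleftrightarrow> (\<forall>\<alpha> \<beta>. \<alpha> *s u + \<beta> *s v = 0 \<longrightarrow> \<alpha> = 0 \<and> \<beta> = 0)"

lemma pairing_add2[simp]: "pairing w (x + y) = pairing w x + pairing w y"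
  by (simp add: pairing_def algebra_simps sum.distrib)
lemma pairing_add1[simp]: "pairing (w + w') x = pairing w x + pairing w' x"
  by (simp add: pairing_def algebra_simps sum.distrib)
lemma pairing_smult2[simp]: "pairing w (c *s x) = c * pairing w x"
  by (simp add: pairing_def algebra_simps sum_distrib_left)
lemma pairing_smult1[simp]: "pairing (c *s w) x = c * pairing w x"
  by (simp add: pairing_def algebra_simps sum_distrib_left)
lemma pairing_diff2[simp]: "pairing w (x - y) = pairing w x - pairing w y"
  by (simp add: pairing_def algebra_simps sum_subtractf)
lemma pairing_diff1[simp]: "pairing (w - w') x = pairing w x - pairing w' x"
  by (simp add: pairing_def algebra_simps sum_subtractf)
lemma pairing_zero2[simp]: "pairing w 0 = 0" by (simp add: pairing_def)
lemma pairing_zero1[simp]: "pairing 0 x = 0" by (simp add: pairing_def)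
lemma pairing_axis: "pairing w (axis n 1) = w $ n"
proof -
  have "pairing w (axis n 1) = (\<Sum>i\<in>UNIV. if i = n then w$i else 0)"
    unfolding pairing_def by (intro sum.cong) (auto simp: axis_def)
  then show ?thesis by simp
qed

lemma cspan2_add: "x \<in> cspan2 u v \<Longrightarrow> y \<in> cspan2 u v \<Longrightarrow> x + y \<in> cspan2 u v"
proof -
  assume "x \<in> cspan2 u v" "y \<in> cspan2 u v"
  then obtain a1 b1 a2 b2 where "x = a1 *s u + b1 *s v" "y = a2 *s u + b2 *s v" unfolding cspan2_def by blast
  then have "x + y = (a1+a2) *s u + (b1+b2) *s v"
    by (simp add: vec_eq_iff algebra_simps)
  then show ?thesis unfolding cspan2_def by blast
qed

lemma cspan2_smult: "x \<in> cspan2 u v \<Longrightarrow> c *s x \<in> cspan2 u v"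
proof -
  assume "x \<in> cspan2 u v"
  then obtain a1 b1 where "x = a1 *s u + b1 *s v" unfolding cspan2_def by blast
  then have "c *s x = (c*a1) *s u + (c*b1) *s v"
    by (simp add: vec_eq_iff algebra_simps)
  then show ?thesis unfolding cspan2_def by blast
qed

lemma cspan2_lin: "x \<in> cspan2 u v \<Longrightarrow> y \<in> cspan2 u v \<Longrightarrow> \<alpha> *s x + \<beta> *s y \<in> cspan2 u v"
  by (intro cspan2_add cspan2_smult)

lemma cspan2_u: "u \<in> cspan2 u v"
proof -
  have "u = 1 *s u + 0 *s v" by (simp add: vec_eq_iff)
  then show ?thesis unfolding cspan2_def by blast
qed
lemma cspan2_v: "v \<in> cspan2 u v"
proof -
  have "v = 0 *s u + 1 *s v" by (simp add: vec_eq_iff)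
  then show ?thesis unfolding cspan2_def by blast
qed
lemma cspan2_0: "0 \<in> cspan2 u v"
proof -
  have "0 = 0 *s u + 0 *s v" by (simp add: vec_eq_iff)
  then show ?thesis unfolding cspan2_def by blast
qed

lemma span2_sub:
  assumes ind: "indep p q" and p: "p \<in> cspan2 u v" and q: "q \<in> cspan2 u v"
  shows "cspan2 u v \<subseteq> cspan2 p q"
proof
  obtain a1 b1 where p': "p = a1 *s u + b1 *s v" using p unfolding cspan2_def by blast
  obtain a2 b2 where q': "q = a2 *s u + b2 *s v" using q unfolding cspan2_def by blast
  define D where "D = a1 * b2 - a2 * b1"
  have D0: "D \<noteq> 0"
  proof
    assume D: "D = 0"
    have "b2 *s p + (- b1) *s q = 0" unfolding p' q' using D
      by (simp add: vec_eq_iff D_def algebra_simps)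
    then have "b2 = 0 \<and> - b1 = 0" using ind unfolding indep_def by blast
    then have "b2 = 0" "b1 = 0" by auto
    moreover have "a2 *s p + (- a1) *s q = 0" unfolding p' q' using calculation
      by (simp add: vec_eq_iff algebra_simps)
    then have "a2 = 0 \<and> - a1 = 0" using ind unfolding indep_def by blast
    with calculation have "a1 = 0" "b1 = 0" by auto
    then have "1 *s p + 0 *s q = 0" unfolding p' by (simp add: vec_eq_iff)
    then have "(1::complex) = 0 \<and> (0::complex) = 0" using ind unfolding indep_def by blast
    then show False by simp
  qed
  fix x assume "x \<in> cspan2 u v"
  then obtain g h where x: "x = g *s u + h *s v" unfolding cspan2_def by blast
  have "x = ((g*b2 - h*a2)/D) *s p + ((h*a1 - g*b1)/D) *s q"
    unfolding x p' q' using D0 by (simp add: vec_eq_iff field_simps) (simp add: D_def algebra_simps)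
  then show "x \<in> cspan2 p q" unfolding cspan2_def by blast
qed

context frame begin

lemma P_exp: "pairing w z = pairing w a * pairing ea z + pairing w b * pairing eb z + pairing w c * pairing ec z + pairing w d * pairing ed z"
  by (subst expand[of z]) (simp add: algebra_simps)

lemma form_exp: "w = pairing w a *s ea + pairing w b *s eb + pairing w c *s ec + pairing w d *s ed"
proof (simp only: vec_eq_iff, rule allI)
  fix n
  have "w $ n = pairing w (axis n 1)" by (simp add: pairing_axis)
  also have "\<dots> = pairing w a * ea $ n + pairing w b * eb $ n + pairing w c * ec $ n + pairing w d * ed $ n"
    by (subst P_exp) (simp add: pairing_axis)
  finally show "w $ n = (pairing w a *s ea + pairing w b *s eb + pairing w c *s ec + pairing w d *s ed) $ n" by simp
qed

lemma coord_eq: "pairing ea x = pairing ea y \<Longrightarrow> pairing eb x = pairing eb y \<Longrightarrow> pairing ec x = pairing ec y \<Longrightarrow> pairing ed x = pairing ed y \<Longrightarrow> x = y"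
  by (metis expand)

lemma l_iff: "z \<in> cspan2 a b \<longleftrightarrow> pairing ec z = 0 \<and> pairing ed z = 0"
proof
  assume "z \<in> cspan2 a b"
  then show "pairing ec z = 0 \<and> pairing ed z = 0" unfolding cspan2_def by (auto simp: ca cb da db)
next
  assume "pairing ec z = 0 \<and> pairing ed z = 0"
  then have "z = pairing ea z *s a + pairing eb z *s b" using expand[of z] by simp
  then show "z \<in> cspan2 a b" unfolding cspan2_def by blast
qed

lemma ann_iff: "w \<in> ann (cspan2 a b) \<longleftrightarrow> pairing w a = 0 \<and> pairing w b = 0"
proof
  assume "w \<in> ann (cspan2 a b)"
  then show "pairing w a = 0 \<and> pairing w b = 0" unfolding ann_def using cspan2_u cspan2_v by blast
next
  assume "pairing w a = 0 \<and> pairing w b = 0"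
  then show "w \<in> ann (cspan2 a b)" unfolding ann_def cspan2_def by auto
qed

end


definition det2 :: "complex \<Rightarrow> complex \<Rightarrow> complex \<Rightarrow> complex \<Rightarrow> complex" where
  "det2 x1 x2 y1 y2 = x1 * y2 - x2 * y1"

definition bet :: "complex \<Rightarrow> complex \<Rightarrow> complex \<Rightarrow> complex \<Rightarrow> complex \<Rightarrow> complex \<Rightarrow> complex \<Rightarrow> complex \<Rightarrow> complex" where
  "bet n11 n12 n21 n22 x1 x2 y1 y2 = x1*y1*n11 + x1*y2*n12 + x2*y1*n21 + x2*y2*n22"

lemma cramer_bet:
  "det2 s2 t2 s3 t3 * det2 g2 h2 g3 h3 * bet n11 n12 n21 n22 x y g h =
     det2 x y s3 t3 * det2 g h g3 h3 * bet n11 n12 n21 n22 s2 t2 g2 h2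
   + det2 x y s3 t3 * det2 g2 h2 g h * bet n11 n12 n21 n22 s2 t2 g3 h3
   + det2 s2 t2 x y * det2 g h g3 h3 * bet n11 n12 n21 n22 s3 t3 g2 h2
   + det2 s2 t2 x y * det2 g2 h2 g h * bet n11 n12 n21 n22 s3 t3 g3 h3"
  unfolding det2_def bet_def by algebra

lemma keyA:
  fixes n11 n12 n21 n22 :: complex
  defines "B \<equiv> bet n11 n12 n21 n22"
  assumes z1: "B s1 t1 g1 h1 = 0" and z2: "B s2 t2 g2 h2 = 0" and z3: "B s3 t3 g3 h3 = 0"
    and p12: "det2 s1 t1 s2 t2 \<noteq> 0" and p13: "det2 s1 t1 s3 t3 \<noteq> 0" and p23: "det2 s2 t2 s3 t3 \<noteq> 0"
    and o12: "det2 g1 h1 g2 h2 \<noteq> 0" and o13: "det2 g1 h1 g3 h3 \<noteq> 0" and o23: "det2 g2 h2 g3 h3 \<noteq> 0"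
  shows "B x y g h = B s2 t2 g3 h3 *
     ((det2 x y s3 t3 * det2 g2 h2 g h - det2 s2 t2 x y * det2 g h g3 h3 * det2 s1 t1 s3 t3 * det2 g2 h2 g1 h1 / (det2 s2 t2 s1 t1 * det2 g1 h1 g3 h3))
      / (det2 s2 t2 s3 t3 * det2 g2 h2 g3 h3))"
proof -
  have E: "\<And>x y g h. det2 s2 t2 s3 t3 * det2 g2 h2 g3 h3 * B x y g h =
     det2 x y s3 t3 * det2 g2 h2 g h * B s2 t2 g3 h3 + det2 s2 t2 x y * det2 g h g3 h3 * B s3 t3 g2 h2"
    using cramer_bet[of s2 t2 s3 t3 g2 h2 g3 h3 n11 n12 n21 n22] z2 z3 unfolding B_def by simp
  have "0 = det2 s1 t1 s3 t3 * det2 g2 h2 g1 h1 * B s2 t2 g3 h3 + det2 s2 t2 s1 t1 * det2 g1 h1 g3 h3 * B s3 t3 g2 h2"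
    using E[of s1 t1 g1 h1] z1 by simp
  moreover have "det2 s2 t2 s1 t1 \<noteq> 0" "det2 g1 h1 g3 h3 \<noteq> 0" using p12 o13 unfolding det2_def by (auto simp: algebra_simps)
  ultimately have b32: "B s3 t3 g2 h2 = - det2 s1 t1 s3 t3 * det2 g2 h2 g1 h1 * B s2 t2 g3 h3 / (det2 s2 t2 s1 t1 * det2 g1 h1 g3 h3)"
    by (simp add: field_simps) (metis add_eq_0_iff)
  have "det2 s2 t2 s3 t3 * det2 g2 h2 g3 h3 * B x y g h =
     det2 x y s3 t3 * det2 g2 h2 g h * B s2 t2 g3 h3 + det2 s2 t2 x y * det2 g h g3 h3 * B s3 t3 g2 h2" by (rule E)
  then show ?thesis using p23 o23 \<open>det2 s2 t2 s1 t1 \<noteq> 0\<close> \<open>det2 g1 h1 g3 h3 \<noteq> 0\<close> unfolding b32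
    by (simp add: field_simps)
qed


lemma smult_nz: "(\<alpha>::complex) *s p = 0 \<Longrightarrow> p \<noteq> 0 \<Longrightarrow> \<alpha> = 0"
  by (auto simp: vec_eq_iff)

context frame begin

lemma line_facts:
  assumes p: "p \<in> L" "p \<in> cspan2 a b" "p \<noteq> 0" and q: "q \<in> L" "q \<notin> cspan2 a b"
    and L: "L = cspan2 u v"
  defines "W \<equiv> pairing ed q *s ec - pairing ec q *s ed"
  shows "L \<subseteq> cspan2 p q" "pairing ec q \<noteq> 0 \<or> pairing ed q \<noteq> 0"
    "\<And>x. x \<in> L \<Longrightarrow> x \<in> cspan2 a b \<Longrightarrow> \<exists>la. x = la *s p"
    "\<And>w. w \<in> ann (cspan2 a b) \<Longrightarrow> w \<in> ann L \<Longrightarrow> \<exists>\<kappa>. w = \<kappa> *s W"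
    "\<And>x w. x \<in> L \<Longrightarrow> x \<notin> cspan2 a b \<Longrightarrow> w \<in> ann (cspan2 a b) \<Longrightarrow> pairing w x = 0 \<Longrightarrow> w \<in> ann L"
    "W \<in> ann (cspan2 a b)" "W \<in> ann L" "W \<noteq> 0"
    "pairing W c = pairing ed q" "pairing W d = - pairing ec q"
proof -
  define \<sigma> where "\<sigma> = pairing ec q"
  define \<tau> where "\<tau> = pairing ed q"
  show st: "pairing ec q \<noteq> 0 \<or> pairing ed q \<noteq> 0" using q(2) l_iff by blast
  have pl: "pairing ec p = 0" "pairing ed p = 0" using p(2) l_iff by auto
  have ind: "indep p q" unfolding indep_def
  proof (intro allI impI)
    fix \<alpha> \<beta> assume h: "\<alpha> *s p + \<beta> *s q = 0"
    have "pairing ec (\<alpha> *s p + \<beta> *s q) = 0" "pairing ed (\<alpha> *s p + \<beta> *s q) = 0" using h by simp_all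
    then have "\<beta> * pairing ec q = 0" "\<beta> * pairing ed q = 0" using pl by simp_all
    then have b0: "\<beta> = 0" using st by auto
    then have "\<alpha> *s p = 0" using h by simp
    then show "\<alpha> = 0 \<and> \<beta> = 0" using b0 smult_nz p(3) by blast
  qed
  show sub: "L \<subseteq> cspan2 p q" unfolding L by (rule span2_sub[OF ind p(1)[unfolded L] q(1)[unfolded L]])
  have rep: "\<And>x. x \<in> L \<Longrightarrow> \<exists>la \<rho>. x = la *s p + \<rho> *s q" using sub unfolding cspan2_def by blast
  show "\<And>x. x \<in> L \<Longrightarrow> x \<in> cspan2 a b \<Longrightarrow> \<exists>la. x = la *s p"
  proof -
    fix x assume x: "x \<in> L" "x \<in> cspan2 a b"
    obtain la \<rho> where xr: "x = la *s p + \<rho> *s q" using rep[OF x(1)] by blast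
    have "pairing ec x = 0" "pairing ed x = 0" using x(2) l_iff by auto
    then have "\<rho> * pairing ec q = 0" "\<rho> * pairing ed q = 0" using pl xr by simp_all
    then have "\<rho> = 0" using st by auto
    then show "\<exists>la. x = la *s p" using xr by auto
  qed
  have Wa: "pairing W a = 0" "pairing W b = 0" unfolding W_def by (simp_all add: ca cb da db)
  show Wc: "pairing W c = pairing ed q" "pairing W d = - pairing ec q" unfolding W_def by (simp_all add: cc cd dc dd)
  show Wl: "W \<in> ann (cspan2 a b)" using Wa ann_iff by blast
  have Wp: "pairing W p = 0" using Wl p(2) unfolding ann_def by blast
  have Wq: "pairing W q = 0" unfolding W_def by (simp add: algebra_simps)
  show "W \<in> ann L" unfolding ann_def
  proof
    show "\<forall>x\<in>L. pairing W x = 0"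
    proof
      fix x assume "x \<in> L"
      then obtain la \<rho> where "x = la *s p + \<rho> *s q" using rep by blast
      then show "pairing W x = 0" using Wp Wq by simp
    qed
  qed
  show "W \<noteq> 0"
  proof
    assume "W = 0"
    then have "pairing W c = 0" "pairing W d = 0" by simp_all
    then show False using Wc st by simp
  qed
  show "\<And>w. w \<in> ann (cspan2 a b) \<Longrightarrow> w \<in> ann L \<Longrightarrow> \<exists>\<kappa>. w = \<kappa> *s W"
  proof -
    fix w assume w: "w \<in> ann (cspan2 a b)" "w \<in> ann L"
    have wab: "pairing w a = 0" "pairing w b = 0" using w(1) ann_iff by auto
    have "pairing w q = 0" using w(2) q(1) unfolding ann_def by blast
    then have wq: "pairing w c * \<sigma> + pairing w d * \<tau> = 0" using P_exp[of w q] wab \<sigma>_def \<tau>_def by simp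
    have wexp: "w = pairing w c *s ec + pairing w d *s ed" using form_exp[of w] wab by simp
    have "\<exists>\<kappa>. pairing w c = \<kappa> * \<tau> \<and> pairing w d = - \<kappa> * \<sigma>"
    proof (cases "\<sigma> = 0")
      case True
      then have "\<tau> \<noteq> 0" using st \<sigma>_def \<tau>_def by simp
      then show ?thesis using True wq by (intro exI[of _ "pairing w c / \<tau>"]) (simp add: field_simps)
    next
      case False
      have e: "pairing w c * \<sigma> = - (pairing w d * \<tau>)" using wq by (simp add: eq_neg_iff_add_eq_0)
      show ?thesis using False e by (intro exI[of _ "- pairing w d / \<sigma>"]) (simp add: field_simps)
    qed
    then obtain \<kappa> where "pairing w c = \<kappa> * \<tau>" "pairing w d = - \<kappa> * \<sigma>" by blast
    then have "pairing w c *s ec + pairing w d *s ed = \<kappa> *s W" unfolding W_def \<sigma>_def \<tau>_def by (simp add: vec_eq_iff algebra_simps)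
    then have "w = \<kappa> *s W" using wexp by simp
    then show "\<exists>\<kappa>. w = \<kappa> *s W" by blast
  qed
  show "\<And>x w. x \<in> L \<Longrightarrow> x \<notin> cspan2 a b \<Longrightarrow> w \<in> ann (cspan2 a b) \<Longrightarrow> pairing w x = 0 \<Longrightarrow> w \<in> ann L"
  proof -
    fix x w assume x: "x \<in> L" "x \<notin> cspan2 a b" and w: "w \<in> ann (cspan2 a b)" "pairing w x = 0"
    obtain la \<rho> where xr: "x = la *s p + \<rho> *s q" using rep[OF x(1)] by blast
    have "\<rho> \<noteq> 0"
    proof
      assume "\<rho> = 0"
      then have "x = la *s p" using xr by simp
      then show False using x(2) cspan2_smult p(2) by blast
    qed
    have wp: "pairing w p = 0" using w(1) p(2) unfolding ann_def by blast
    have "\<rho> * pairing w q = 0" using w(2) xr wp by simp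
    then have wq: "pairing w q = 0" using \<open>\<rho> \<noteq> 0\<close> by simp
    show "w \<in> ann L" unfolding ann_def
    proof
      show "\<forall>y\<in>L. pairing w y = 0"
      proof
        fix y assume "y \<in> L"
        then obtain \<alpha> \<beta> where "y = \<alpha> *s p + \<beta> *s q" using rep by blast
        then show "pairing w y = 0" using wp wq by simp
      qed
    qed
  qed
qed

end


lemma mv_lin: "(M::complex^4^4) *v (\<alpha> *s x + \<beta> *s y) = \<alpha> *s (M *v x) + \<beta> *s (M *v y)"
  by (simp add: vec_eq_iff matrix_vector_mult_def sum.distrib sum_distrib_left algebra_simps)

lemma scaleR_smult: "(r::real) *\<^sub>R (x::complex^4) = complex_of_real r *s x"
  by (simp only: vec_eq_iff vector_scaleR_component vector_smult_component) (simp add: scaleR_conv_of_real)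

lemma subspace_cspan2: "subspace (cspan2 u v)"
  unfolding subspace_def using cspan2_0 cspan2_add cspan2_smult by (auto simp: scaleR_smult)

lemma closed_cspan2: "closed (cspan2 u v)"
  by (rule closed_subspace[OF subspace_cspan2])

lemma subspace_ann: "subspace (ann L)"
  unfolding subspace_def ann_def by (auto simp: scaleR_smult)

lemma closed_ann: "closed (ann L)"
  by (rule closed_subspace[OF subspace_ann])

lemma PT_sub:
  assumes cl: "closed L"
    and F6: "\<forall>x w. x \<in> L \<and> x \<notin> l \<and> w \<in> ann l \<and> pairing w x = 0 \<longrightarrow> w \<in> ann L"
    and pt: "(x, w) \<in> proper_transform l L"
  shows "x \<in> L" "w \<in> ann l" "w \<in> ann L" "x \<noteq> 0" "w \<noteq> 0"
proof -
  have "{p \<in> blowup l. fst p \<in> L - l} \<subseteq> L \<times> (ann l \<inter> ann L)"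
    using F6 unfolding blowup_def by auto
  moreover have "closed (L \<times> (ann l \<inter> ann L))" using cl closed_ann by (intro closed_Times closed_Int) auto
  ultimately have "closure {p \<in> blowup l. fst p \<in> L - l} \<subseteq> L \<times> (ann l \<inter> ann L)"
    by (rule closure_minimal)
  then show "x \<in> L" "w \<in> ann l" "w \<in> ann L" "x \<noteq> 0" "w \<noteq> 0"
    using pt unfolding proper_transform_def blowup_def by auto
qed

lemma PT_point:
  assumes L: "L = cspan2 u v" and p: "p \<in> L" "p \<in> l" "p \<noteq> 0" and q: "q \<in> L" "q \<notin> l"
    and l: "l = cspan2 a b"
    and W: "W \<in> ann l" "W \<in> ann L" "W \<noteq> 0"
  shows "(p, W) \<in> proper_transform l L"
proof -
  define f where "f = (\<lambda>n::nat. (p + (1 / real (Suc n)) *\<^sub>R q, W))"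
  have inS: "f n \<in> {p \<in> blowup l. fst p \<in> L - l}" for n
  proof -
    define e where "e = complex_of_real (1 / real (Suc n))"
    have e0: "e \<noteq> 0" unfolding e_def of_real_eq_0_iff by simp
    have fe: "f n = (p + e *s q, W)" unfolding f_def e_def by (simp add: scaleR_smult)
    have inL: "p + e *s q \<in> L" using p(1) q(1) unfolding L by (intro cspan2_add cspan2_smult)
    have notl: "p + e *s q \<notin> l"
    proof
      assume "p + e *s q \<in> l"
      moreover have "(-1) *s p \<in> l" using p(2) unfolding l by (rule cspan2_smult)
      ultimately have "(1/e) *s ((p + e *s q) + (-1) *s p) \<in> l" unfolding l using cspan2_add cspan2_smult by blast
      moreover have "(1/e) *s ((p + e *s q) + (-1) *s p) = q" using e0 by (simp add: vec_eq_iff field_simps)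
      ultimately show False using q(2) by simp
    qed
    have nz: "p + e *s q \<noteq> 0" using notl cspan2_0 l by auto
    have "pairing W (p + e *s q) = 0" using W(2) inL unfolding ann_def by blast
    then show ?thesis using fe inL notl nz W unfolding blowup_def by auto
  qed
  have "(\<lambda>n. inverse (real (Suc n)) *\<^sub>R q) \<longlonglongrightarrow> 0 *\<^sub>R q"
    by (intro tendsto_scaleR tendsto_const LIMSEQ_inverse_real_of_nat)
  then have "(\<lambda>n. (1 / real (Suc n)) *\<^sub>R q) \<longlonglongrightarrow> 0" by (simp add: divide_inverse)
  then have "(\<lambda>n. p + (1 / real (Suc n)) *\<^sub>R q) \<longlonglongrightarrow> p + 0"
    by (intro tendsto_add tendsto_const)
  then have "f \<longlonglongrightarrow> (p, W)" unfolding f_def by (intro tendsto_Pair tendsto_const) simp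
  then have "(p, W) \<in> closure {p \<in> blowup l. fst p \<in> L - l}"
    unfolding closure_sequential using inS by blast
  moreover have "(p, W) \<in> blowup l"
    using p W unfolding blowup_def ann_def by auto
  ultimately show ?thesis unfolding proper_transform_def by blast
qed

context frame begin

lemma B_coords:
  assumes x: "x \<in> cspan2 a b" and w: "w \<in> ann (cspan2 a b)"
  shows "pairing w (M *v x) = bet (- pairing ed (M *v a)) (pairing ec (M *v a)) (- pairing ed (M *v b)) (pairing ec (M *v b))
           (pairing ea x) (pairing eb x) (- pairing w d) (pairing w c)"
proof -
  have z: "pairing ec x = 0" "pairing ed x = 0" using x l_iff by auto
  have "x = pairing ea x *s a + pairing eb x *s b + pairing ec x *s c + pairing ed x *s d" by (rule expand)
  also have "\<dots> = pairing ea x *s a + pairing eb x *s b" using z by simp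
  finally have xe: "x = pairing ea x *s a + pairing eb x *s b" .
  have wab: "pairing w a = 0" "pairing w b = 0" using w ann_iff by auto
  have Pw: "pairing w y = pairing w c * pairing ec y + pairing w d * pairing ed y" for y
    using P_exp[of w y] wab by simp
  have "M *v x = pairing ea x *s (M *v a) + pairing eb x *s (M *v b)"
    by (subst xe) (rule mv_lin)
  then show ?thesis unfolding bet_def using Pw[of "M *v a"] Pw[of "M *v b"] by (simp add: algebra_simps)
qed

lemma M_exists:
  "\<exists>M::complex^4^4. - pairing ed (M *v a) = n11 \<and> pairing ec (M *v a) = n12 \<and> - pairing ed (M *v b) = n21 \<and> pairing ec (M *v b) = n22"
proof -
  define M :: "complex^4^4" where "M = (\<chi> i j. (n12 * ea$j + n22 * eb$j) * c$i + (- n11 * ea$j - n21 * eb$j) * d$i)"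
  have Mv: "M *v y = (n12 * pairing ea y + n22 * pairing eb y) *s c + (- n11 * pairing ea y - n21 * pairing eb y) *s d" for y
  proof (simp only: vec_eq_iff, rule allI)
    fix i
    have "(M *v y)$i = (\<Sum>j\<in>UNIV. (c$i*n12) * (ea$j*y$j) + (c$i*n22)*(eb$j*y$j) + (- d$i*n11)*(ea$j*y$j) + (- d$i*n21)*(eb$j*y$j))"
      unfolding M_def matrix_vector_mult_def by (simp add: algebra_simps)
    also have "\<dots> = (c$i*n12) * pairing ea y + (c$i*n22) * pairing eb y + (- d$i*n11) * pairing ea y + (- d$i*n21) * pairing eb y"
      unfolding pairing_def by (simp only: sum.distrib sum_distrib_left)
    finally show "(M *v y)$i = ((n12 * pairing ea y + n22 * pairing eb y) *s c + (- n11 * pairing ea y - n21 * pairing eb y) *s d)$i"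
      by (simp add: algebra_simps)
  qed
  show ?thesis by (intro exI[of _ M]) (simp add: Mv aa ab ba bb cc cd dc dd)
qed

end


definition kk :: "4 \<Rightarrow> nat" where
  "kk r = (if r = 1 then 1 else if r = 2 then 2 else if r = 3 then 3 else 4)"

lemma kk_range: "kk r \<in> {1..4}" unfolding kk_def by auto

lemma kk_onto: "i \<in> {1..4::nat} \<Longrightarrow> \<exists>r. kk r = i"
proof -
  assume "i \<in> {1..4::nat}"
  then have "i = 1 \<or> i = 2 \<or> i = 3 \<or> i = 4" by auto
  moreover have "kk 1 = 1" "kk 2 = 2" "kk 3 = 3" "kk 4 = 4" unfolding kk_def by simp_all
  ultimately show ?thesis by metis
qed

definition Hm :: "(4 \<Rightarrow> complex) \<Rightarrow> (4 \<Rightarrow> complex) \<Rightarrow> (4 \<Rightarrow> complex) \<Rightarrow> (4 \<Rightarrow> complex) \<Rightarrow> complex^4^4" where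
  "Hm S T G K = (\<chi> r j. if j = 1 then S r * G r else if j = 2 then S r * K r else if j = 3 then T r * G r else T r * K r)"

lemma Hm_mult: "(Hm S T G K *v n) $ r = bet (n$1) (n$2) (n$3) (n$4) (S r) (T r) (G r) (K r)"
proof -
  have d: "distinct [1,2,3,4::4]" by simp
  show ?thesis unfolding Hm_def matrix_vector_mult_def bet_def
    by (simp add: sum4[OF d])
qed



locale cfg = frame +
  fixes ls :: "nat \<Rightarrow> (complex^4) set" and p q U V :: "nat \<Rightarrow> complex^4"
  assumes lsUV: "i \<in> {1..4} \<Longrightarrow> ls i = cspan2 (U i) (V i)"
    and pL: "i \<in> {1..4} \<Longrightarrow> p i \<in> ls i" and pl: "i \<in> {1..4} \<Longrightarrow> p i \<in> cspan2 a b"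
    and p0: "i \<in> {1..4} \<Longrightarrow> p i \<noteq> 0"
    and qL: "i \<in> {1..4} \<Longrightarrow> q i \<in> ls i" and ql: "i \<in> {1..4} \<Longrightarrow> q i \<notin> cspan2 a b"
    and skew: "i \<in> {1..4} \<Longrightarrow> j \<in> {1..4} \<Longrightarrow> i \<noteq> j \<Longrightarrow> \<not> meets (ls i) (ls j)"
begin

abbreviation "s i \<equiv> pairing ea (p i)"
abbreviation "t i \<equiv> pairing eb (p i)"
abbreviation "sg i \<equiv> pairing ec (q i)"
abbreviation "ta i \<equiv> pairing ed (q i)"
abbreviation "W i \<equiv> pairing ed (q i) *s ec - pairing ec (q i) *s ed"

context fixes i :: nat assumes i: "i \<in> {1..4}" begin
lemmas LF = line_facts[OF pL[OF i] pl[OF i] p0[OF i] qL[OF i] ql[OF i] lsUV[OF i]]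
end

lemma pc: "i \<in> {1..4} \<Longrightarrow> pairing ec (p i) = 0 \<and> pairing ed (p i) = 0"
  using pl l_iff by blast

lemma p_exp: "i \<in> {1..4} \<Longrightarrow> p i = s i *s a + t i *s b"
proof -
  assume i: "i \<in> {1..4}"
  have "p i = s i *s a + t i *s b + pairing ec (p i) *s c + pairing ed (p i) *s d" by (rule expand)
  also have "\<dots> = s i *s a + t i *s b" using pc[OF i] by simp
  finally show ?thesis .
qed

lemma st0: "i \<in> {1..4} \<Longrightarrow> s i \<noteq> 0 \<or> t i \<noteq> 0"
proof (rule ccontr)
  assume i: "i \<in> {1..4}" and h: "\<not> (s i \<noteq> 0 \<or> t i \<noteq> 0)"
  have "p i = s i *s a + t i *s b" by (rule p_exp[OF i])
  also have "\<dots> = 0" using h by simp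
  finally show False using p0[OF i] by simp
qed

lemma meetsI: "z \<in> L \<Longrightarrow> z \<in> M \<Longrightarrow> z \<noteq> 0 \<Longrightarrow> meets L M"
  unfolding meets_def by blast

lemma prop2: assumes "x1 \<noteq> 0 \<or> y1 \<noteq> 0" "det2 x1 y1 x2 y2 = 0"
  shows "\<exists>k. x2 = k * x1 \<and> y2 = k * y1"
proof (cases "x1 = 0")
  case True
  then have "y1 \<noteq> 0" using assms by simp
  then show ?thesis using True assms(2) unfolding det2_def by (intro exI[of _ "y2 / y1"]) (auto simp: field_simps)
next
  case False
  have e: "x1 * y2 = y1 * x2" using assms(2) unfolding det2_def by simp
  show ?thesis using False e by (intro exI[of _ "x2 / x1"]) (auto simp: field_simps)
qed

lemma dP: assumes i: "i \<in> {1..4}" and j: "j \<in> {1..4}" and ij: "i \<noteq> j"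
  shows "det2 (s i) (t i) (s j) (t j) \<noteq> 0"
proof
  assume "det2 (s i) (t i) (s j) (t j) = 0"
  then obtain k where k: "s j = k * s i" "t j = k * t i" using prop2 st0[OF i] by blast
  have "p j = k *s p i" by (rule coord_eq) (use k pc[OF i] pc[OF j] in simp_all)
  then have "p j \<in> ls i" using pL[OF i] lsUV[OF i] cspan2_smult by simp
  then have "meets (ls i) (ls j)" using pL[OF j] p0[OF j] by (intro meetsI)
  then show False using skew i j ij by blast
qed

lemma dW: assumes i: "i \<in> {1..4}" and j: "j \<in> {1..4}" and ij: "i \<noteq> j"
  shows "det2 (sg i) (ta i) (sg j) (ta j) \<noteq> 0"
proof
  assume "det2 (sg i) (ta i) (sg j) (ta j) = 0"
  then obtain k where k: "sg j = k * sg i" "ta j = k * ta i" using prop2[OF LF(2)[OF i]] by blast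
  define y where "y = q j + (-k) *s q i"
  have yc: "pairing ec y = 0" "pairing ed y = 0" unfolding y_def using k by simp_all
  define D where "D = det2 (s i) (t i) (s j) (t j)"
  have D0: "D \<noteq> 0" unfolding D_def by (rule dP[OF i j ij])
  define x where "x = det2 (pairing ea y) (pairing eb y) (s j) (t j) / D"
  define z where "z = det2 (s i) (t i) (pairing ea y) (pairing eb y) / D"
  have yv: "y = x *s p i + z *s p j"
  proof (rule coord_eq)
    show "pairing ea y = pairing ea (x *s p i + z *s p j)" using D0 unfolding x_def z_def
      by (simp add: field_simps det2_def) (simp add: D_def det2_def algebra_simps)
    show "pairing eb y = pairing eb (x *s p i + z *s p j)" using D0 unfolding x_def z_def
      by (simp add: field_simps det2_def) (simp add: D_def det2_def algebra_simps)
    show "pairing ec y = pairing ec (x *s p i + z *s p j)" using yc pc[OF i] pc[OF j] by simp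
    show "pairing ed y = pairing ed (x *s p i + z *s p j)" using yc pc[OF i] pc[OF j] by simp
  qed
  define v where "v = q j + (-z) *s p j"
  have v2: "v = x *s p i + k *s q i"
  proof (rule coord_eq)
    have e1: "pairing ea (q j) - k * pairing ea (q i) = x * s i + z * s j"
      using arg_cong[OF yv, of "pairing ea"] unfolding y_def by simp
    have e2: "pairing eb (q j) - k * pairing eb (q i) = x * t i + z * t j"
      using arg_cong[OF yv, of "pairing eb"] unfolding y_def by simp
    show "pairing ea v = pairing ea (x *s p i + k *s q i)" unfolding v_def using e1 by simp algebra
    show "pairing eb v = pairing eb (x *s p i + k *s q i)" unfolding v_def using e2 by simp algebra
    show "pairing ec v = pairing ec (x *s p i + k *s q i)" unfolding v_def using pc[OF i] pc[OF j] k by simp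
    show "pairing ed v = pairing ed (x *s p i + k *s q i)" unfolding v_def using pc[OF i] pc[OF j] k by simp
  qed
  have "v \<in> cspan2 (U j) (V j)" unfolding v_def
    by (rule cspan2_add[OF _ cspan2_smult]) (use qL[OF j] pL[OF j] lsUV[OF j] in auto)
  then have "v \<in> ls j" using lsUV[OF j] by simp
  moreover have "v \<in> ls i" unfolding v2 using qL[OF i] pL[OF i] lsUV[OF i] cspan2_lin by simp
  moreover have "v \<noteq> 0"
  proof
    assume "v = 0"
    then have "pairing ec v = 0" "pairing ed v = 0" by simp_all
    then show False unfolding v_def using pc[OF j] LF(2)[OF j] by simp
  qed
  ultimately have "meets (ls i) (ls j)" by (intro meetsI)
  then show False using skew i j ij by blast
qed


abbreviation "nB M \<equiv> bet (- pairing ed (M *v a)) (pairing ec (M *v a)) (- pairing ed (M *v b)) (pairing ec (M *v b))"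

lemma bet_scale: "bet n1 n2 n3 n4 (la * x) (la * y) (k * g) (k * h) = la * k * bet n1 n2 n3 n4 x y g h"
  unfolding bet_def by (simp add: algebra_simps)

lemma cond:
  assumes i: "i \<in> {1..4}" and ex: "(x, w) \<in> exc_div (cspan2 a b)"
    and pt: "(x, w) \<in> proper_transform (cspan2 a b) (ls i)" and z: "pairing w (M *v x) = 0"
  shows "nB M (s i) (t i) (sg i) (ta i) = 0"
proof -
  have xl: "x \<in> cspan2 a b" and wl: "w \<in> ann (cspan2 a b)" using ex unfolding exc_div_def blowup_def by auto
  have cl: "closed (ls i)" using lsUV[OF i] closed_cspan2 by simp
  have F6: "\<forall>x w. x \<in> ls i \<and> x \<notin> cspan2 a b \<and> w \<in> ann (cspan2 a b) \<and> pairing w x = 0 \<longrightarrow> w \<in> ann (ls i)"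
    using LF(5)[OF i] by blast
  note P = PT_sub[OF cl F6 pt]
  obtain la where la: "x = la *s p i" using LF(3)[OF i] P(1) xl by blast
  obtain k where k: "w = k *s W i" using LF(4)[OF i] wl P(3) by blast
  have la0: "la \<noteq> 0" using P(4) la by auto
  have k0: "k \<noteq> 0" using P(5) k by auto
  have "0 = nB M (pairing ea x) (pairing eb x) (- pairing w d) (pairing w c)"
    using B_coords[OF xl wl, of M] z by simp
  also have "\<dots> = nB M (la * s i) (la * t i) (k * sg i) (k * ta i)"
    unfolding la k by (simp add: cc cd dc dd)
  also have "\<dots> = la * k * nB M (s i) (t i) (sg i) (ta i)" by (rule bet_scale)
  finally show ?thesis using la0 k0 by simp
qed

lemma point:
  assumes i: "i \<in> {1..4}"
  shows "(p i, W i) \<in> proper_transform (cspan2 a b) (ls i)" "(p i, W i) \<in> exc_div (cspan2 a b)"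
    "pairing (W i) (M *v p i) = nB M (s i) (t i) (sg i) (ta i)"
proof -
  show "(p i, W i) \<in> proper_transform (cspan2 a b) (ls i)"
    by (rule PT_point[OF lsUV[OF i] pL[OF i] pl[OF i] p0[OF i] qL[OF i] ql[OF i] refl LF(6)[OF i] LF(7)[OF i] LF(8)[OF i]])
  have "pairing (W i) (p i) = 0" using LF(6)[OF i] pl[OF i] unfolding ann_def by blast
  then show "(p i, W i) \<in> exc_div (cspan2 a b)"
    unfolding exc_div_def blowup_def using p0[OF i] LF(6)[OF i] LF(8)[OF i] pl[OF i] by auto
  show "pairing (W i) (M *v p i) = nB M (s i) (t i) (sg i) (ta i)"
    using B_coords[OF pl[OF i] LF(6)[OF i], of M] by (simp add: cc cd dc dd)
qed


definition gg :: "complex \<Rightarrow> complex \<Rightarrow> complex \<Rightarrow> complex \<Rightarrow> complex" where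
  "gg x y g h = ((det2 x y (s 3) (t 3) * det2 (sg 2) (ta 2) g h - det2 (s 2) (t 2) x y * det2 g h (sg 3) (ta 3) * det2 (s 1) (t 1) (s 3) (t 3) * det2 (sg 2) (ta 2) (sg 1) (ta 1) / (det2 (s 2) (t 2) (s 1) (t 1) * det2 (sg 1) (ta 1) (sg 3) (ta 3)))
      / (det2 (s 2) (t 2) (s 3) (t 3) * det2 (sg 2) (ta 2) (sg 3) (ta 3)))"

lemma K:
  assumes z: "\<And>i. i \<in> {1..4} \<Longrightarrow> nB M (s i) (t i) (sg i) (ta i) = 0"
  shows "nB M x y g h = nB M (s 2) (t 2) (sg 3) (ta 3) * gg x y g h"
proof -
  have i: "(1::nat) \<in> {1..4}" "(2::nat) \<in> {1..4}" "(3::nat) \<in> {1..4}" by auto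
  show ?thesis unfolding gg_def
    by (rule keyA[OF z[OF i(1)] z[OF i(2)] z[OF i(3)] dP[OF i(1) i(2)] dP[OF i(1) i(3)] dP[OF i(2) i(3)]
          dW[OF i(1) i(2)] dW[OF i(1) i(3)] dW[OF i(2) i(3)]]) simp_all
qed

lemma zeros:
  assumes C: "C = {(x, w) \<in> exc_div (cspan2 a b). pairing w (M *v x) = 0}"
    and m: "\<forall>i\<in>{1..4}. C \<inter> proper_transform (cspan2 a b) (ls i) \<noteq> {}"
    and i: "i \<in> {1..4}"
  shows "nB M (s i) (t i) (sg i) (ta i) = 0"
proof -
  obtain x w where xw: "(x, w) \<in> C" "(x, w) \<in> proper_transform (cspan2 a b) (ls i)" using m i by fast
  show ?thesis by (rule cond[OF i _ xw(2)]) (use xw(1) C in auto)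
qed

lemma unique_C:
  assumes C1: "curve11 (cspan2 a b) C1" "\<forall>i\<in>{1..4}. C1 \<inter> proper_transform (cspan2 a b) (ls i) \<noteq> {}"
    and C2: "curve11 (cspan2 a b) C2" "\<forall>i\<in>{1..4}. C2 \<inter> proper_transform (cspan2 a b) (ls i) \<noteq> {}"
  shows "C1 = C2"
proof -
  obtain M1 where M1: "\<exists>x\<in>cspan2 a b. \<exists>w\<in>ann (cspan2 a b). pairing w (M1 *v x) \<noteq> 0"
     "C1 = {(x, w) \<in> exc_div (cspan2 a b). pairing w (M1 *v x) = 0}" using C1(1) unfolding curve11_def by blast
  obtain M2 where M2: "\<exists>x\<in>cspan2 a b. \<exists>w\<in>ann (cspan2 a b). pairing w (M2 *v x) \<noteq> 0"
     "C2 = {(x, w) \<in> exc_div (cspan2 a b). pairing w (M2 *v x) = 0}" using C2(1) unfolding curve11_def by blast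
  have K1: "nB M1 x y g h = nB M1 (s 2) (t 2) (sg 3) (ta 3) * gg x y g h" for x y g h
    by (rule K) (rule zeros[OF M1(2) C1(2)])
  have K2: "nB M2 x y g h = nB M2 (s 2) (t 2) (sg 3) (ta 3) * gg x y g h" for x y g h
    by (rule K) (rule zeros[OF M2(2) C2(2)])
  have c1: "nB M1 (s 2) (t 2) (sg 3) (ta 3) \<noteq> 0"
  proof
    assume h: "nB M1 (s 2) (t 2) (sg 3) (ta 3) = 0"
    obtain x w where "x \<in> cspan2 a b" "w \<in> ann (cspan2 a b)" "pairing w (M1 *v x) \<noteq> 0" using M1(1) by blast
    then show False using B_coords[of x w M1] K1[of "pairing ea x" "pairing eb x" "- pairing w d" "pairing w c"] h by simp
  qed
  have c2: "nB M2 (s 2) (t 2) (sg 3) (ta 3) \<noteq> 0"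
  proof
    assume h: "nB M2 (s 2) (t 2) (sg 3) (ta 3) = 0"
    obtain x w where "x \<in> cspan2 a b" "w \<in> ann (cspan2 a b)" "pairing w (M2 *v x) \<noteq> 0" using M2(1) by blast
    then show False using B_coords[of x w M2] K2[of "pairing ea x" "pairing eb x" "- pairing w d" "pairing w c"] h by simp
  qed
  have eq: "pairing w (M1 *v x) = 0 \<longleftrightarrow> pairing w (M2 *v x) = 0" if "(x, w) \<in> exc_div (cspan2 a b)" for x w
  proof -
    have xw: "x \<in> cspan2 a b" "w \<in> ann (cspan2 a b)" using that unfolding exc_div_def blowup_def by auto
    show ?thesis using B_coords[OF xw, of M1] B_coords[OF xw, of M2] c1 c2
       K1[of "pairing ea x" "pairing eb x" "- pairing w d" "pairing w c"] K2[of "pairing ea x" "pairing eb x" "- pairing w d" "pairing w c"] by simp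
  qed
  show ?thesis unfolding M1(2) M2(2) using eq by auto
qed


lemma exists_C:
  assumes uniq: "\<And>L. is_line L \<Longrightarrow> \<forall>i\<in>{1..4}. meets L (ls i) \<Longrightarrow> L = cspan2 a b"
  shows "\<exists>C. curve11 (cspan2 a b) C \<and> (\<forall>i\<in>{1..4}. C \<inter> proper_transform (cspan2 a b) (ls i) \<noteq> {})"
proof (rule ccontr)
  assume nex: "\<not> ?thesis"
  define HH where "HH = Hm (\<lambda>r. s (kk r)) (\<lambda>r. t (kk r)) (\<lambda>r. sg (kk r)) (\<lambda>r. ta (kk r))"
  have inj0: "n = 0" if hn: "HH *v n = 0" for n
  proof (rule ccontr)
    assume n0: "n \<noteq> 0"
    obtain M where M: "- pairing ed (M *v a) = n$1" "pairing ec (M *v a) = n$2" "- pairing ed (M *v b) = n$3" "pairing ec (M *v b) = n$4"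
      using M_exists by blast
    have zi: "nB M (s i) (t i) (sg i) (ta i) = 0" if i: "i \<in> {1..4}" for i :: nat
    proof -
      obtain r where r: "kk r = i" using kk_onto[OF i] by blast
      have "(HH *v n) $ r = 0" using hn by simp
      then show ?thesis unfolding HH_def Hm_mult M[symmetric] r .
    qed
    define C where "C = {(x, w) \<in> exc_div (cspan2 a b). pairing w (M *v x) = 0}"
    have al: "a \<in> cspan2 a b" "b \<in> cspan2 a b" by (rule cspan2_u, rule cspan2_v)
    have ecl: "ec \<in> ann (cspan2 a b)" "ed \<in> ann (cspan2 a b)" using ann_iff ca cb da db by auto
    have "\<exists>x\<in>cspan2 a b. \<exists>w\<in>ann (cspan2 a b). pairing w (M *v x) \<noteq> 0"
    proof (rule ccontr)
      assume "\<not> ?thesis"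
      then have "pairing ed (M *v a) = 0" "pairing ec (M *v a) = 0" "pairing ed (M *v b) = 0" "pairing ec (M *v b) = 0"
        using al ecl by blast+
      then have "n$1 = 0" "n$2 = 0" "n$3 = 0" "n$4 = 0" using M by simp_all
      then have "n = 0" by (simp add: vec_eq_iff forall_4)
      then show False using n0 by simp
    qed
    then have "curve11 (cspan2 a b) C" unfolding curve11_def C_def by blast
    moreover have "\<forall>i\<in>{1..4}. C \<inter> proper_transform (cspan2 a b) (ls i) \<noteq> {}"
    proof
      fix i :: nat assume i: "i \<in> {1..4}"
      have "(p i, W i) \<in> C" unfolding C_def using point(2)[OF i] point(3)[OF i, of M] zi[OF i] by simp
      then show "C \<inter> proper_transform (cspan2 a b) (ls i) \<noteq> {}" using point(1)[OF i] by blast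
    qed
    ultimately show False using nex by blast
  qed
  have "inj ((*v) HH)"
  proof (rule injI)
    fix x y assume "HH *v x = HH *v y"
    then have "HH *v (x - y) = 0" by (simp add: matrix_vector_mult_diff_distrib)
    then have "x - y = 0" by (rule inj0)
    then show "x = y" by simp
  qed
  then have "surj ((*v) HH)" by (rule vec.linear_inj_imp_surj[OF matrix_vector_mul_linear_gen])
  define R where "R = (\<chi> r. det2 (pairing ea (q (kk r))) (pairing eb (q (kk r))) (s (kk r)) (t (kk r)))"
  obtain n where n: "HH *v n = R" using \<open>surj ((*v) HH)\<close> by (metis surjD)
  have ni: "bet (n$1) (n$2) (n$3) (n$4) (s i) (t i) (sg i) (ta i) = det2 (pairing ea (q i)) (pairing eb (q i)) (s i) (t i)"
    if i: "i \<in> {1..4}" for i :: nat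
  proof -
    obtain r where r: "kk r = i" using kk_onto[OF i] by blast
    have "(HH *v n) $ r = R $ r" using n by simp
    then show ?thesis unfolding HH_def Hm_mult R_def by (simp add: r)
  qed
  define x1 where "x1 = n$3 *s a + (- n$1) *s b + c"
  define x2 where "x2 = n$4 *s a + (- n$2) *s b + d"
  define L' where "L' = cspan2 x1 x2"
  have x1c: "pairing ea x1 = n$3" "pairing eb x1 = - n$1" "pairing ec x1 = 1" "pairing ed x1 = 0"
    unfolding x1_def by (simp_all add: aa ab ac ba bb bc ca cb cc da db dc)
  have x2c: "pairing ea x2 = n$4" "pairing eb x2 = - n$2" "pairing ec x2 = 0" "pairing ed x2 = 1"
    unfolding x2_def by (simp_all add: aa ab ad ba bb bd ca cb cd da db dd)
  have "is_line L'" unfolding is_line_def L'_def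
  proof (intro exI conjI allI impI)
    fix \<alpha> \<beta> assume h: "\<alpha> *s x1 + \<beta> *s x2 = 0"
    have "pairing ec (\<alpha> *s x1 + \<beta> *s x2) = 0" "pairing ed (\<alpha> *s x1 + \<beta> *s x2) = 0" using h by simp_all
    then show "\<alpha> = 0" "\<beta> = 0" using x1c x2c by simp_all
  qed (rule refl)
  moreover have "\<forall>i\<in>{1..4}. meets L' (ls i)"
  proof
    fix i :: nat assume i: "i \<in> {1..4}"
    define z where "z = sg i *s x1 + ta i *s x2"
    define R1 where "R1 = pairing ea z - pairing ea (q i)"
    define R2 where "R2 = pairing eb z - pairing eb (q i)"
    have zc: "pairing ea z = sg i * n$3 + ta i * n$4" "pairing eb z = - sg i * n$1 - ta i * n$2"
      "pairing ec z = sg i" "pairing ed z = ta i" unfolding z_def using x1c x2c by simp_all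
    have "det2 (s i) (t i) R1 R2 = 0" using ni[OF i] unfolding R1_def R2_def zc bet_def det2_def
      by (simp add: algebra_simps)
    then obtain k where k: "R1 = k * s i" "R2 = k * t i" using prop2[OF st0[OF i]] by blast
    have zq: "z = q i + k *s p i"
    proof (rule coord_eq)
      show "pairing ea z = pairing ea (q i + k *s p i)" using k(1) unfolding R1_def by (simp add: algebra_simps diff_eq_eq)
      show "pairing eb z = pairing eb (q i + k *s p i)" using k(2) unfolding R2_def by (simp add: algebra_simps diff_eq_eq)
      show "pairing ec z = pairing ec (q i + k *s p i)" using zc pc[OF i] by simp
      show "pairing ed z = pairing ed (q i + k *s p i)" using zc pc[OF i] by simp
    qed
    have "z \<in> L'" unfolding L'_def cspan2_def z_def by blast
    moreover have "z \<in> ls i" unfolding zq using qL[OF i] pL[OF i] lsUV[OF i]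
      by (metis cspan2_add cspan2_smult)
    moreover have "z \<noteq> 0"
    proof
      assume "z = 0"
      then have "pairing ec z = 0" "pairing ed z = 0" by simp_all
      then show False using zc LF(2)[OF i] by simp
    qed
    ultimately show "meets L' (ls i)" by (rule meetsI)
  qed
  ultimately have "L' = cspan2 a b" by (rule uniq)
  moreover have "x1 \<in> L'" unfolding L'_def by (rule cspan2_u)
  ultimately have "x1 \<in> cspan2 a b" by simp
  then show False using l_iff x1c by simp
qed

end


theorem lemma6p13:
  fixes ls :: "nat \<Rightarrow> (complex^4) set" and l :: "(complex^4) set"
  assumes lines: "\<forall>i\<in>{1..4}. is_line (ls i)"
    and skew: "\<forall>i\<in>{1..4}. \<forall>j\<in>{1..4}. i \<noteq> j \<longrightarrow> \<not> meets (ls i) (ls j)"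
    and l_line: "is_line l"
    and l_meets: "\<forall>i\<in>{1..4}. meets l (ls i)"
    and l_unique: "\<forall>L. is_line L \<and> (\<forall>i\<in>{1..4}. meets L (ls i)) \<longrightarrow> L = l"
  shows "\<exists>!C. curve11 l C \<and> (\<forall>i\<in>{1..4}. C \<inter> proper_transform l (ls i) \<noteq> {})"
proof -
  obtain a b where lab: "indep a b" "l = cspan2 a b" using l_line unfolding is_line_def indep_def by blast
  obtain c d ea eb ec ed where fr: "frame a b c d ea eb ec ed"
    using frame_exists[OF lab(1)[unfolded indep_def]] by blast
  interpret frame a b c d ea eb ec ed by (rule fr)
  have ex1: "\<forall>i\<in>{1..4}. \<exists>uv. indep (fst uv) (snd uv) \<and> ls i = cspan2 (fst uv) (snd uv)"
  proof
    fix i :: nat assume i: "i \<in> {1..4}"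
    obtain u v where "indep u v" "ls i = cspan2 u v" using lines i unfolding is_line_def indep_def by blast
    then show "\<exists>uv. indep (fst uv) (snd uv) \<and> ls i = cspan2 (fst uv) (snd uv)" by (intro exI[of _ "(u, v)"]) simp
  qed
  obtain f where f: "\<forall>i\<in>{1..4}. indep (fst (f i)) (snd (f i)) \<and> ls i = cspan2 (fst (f i)) (snd (f i))"
    using bchoice[OF ex1] by blast
  define U where "U i = fst (f i)" for i
  define V where "V i = snd (f i)" for i
  have UV: "ls i = cspan2 (U i) (V i)" "indep (U i) (V i)" if "i \<in> {1..4}" for i
    using f that unfolding U_def V_def by auto
  have ex2: "\<forall>i\<in>{1..4}. \<exists>x. x \<in> ls i \<and> x \<in> l \<and> x \<noteq> 0"
  proof
    fix i :: nat assume i: "i \<in> {1..4}"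
    have "l \<inter> ls i \<noteq> {0}" using l_meets i unfolding meets_def by blast
    moreover have "0 \<in> l \<inter> ls i" using lab(2) UV(1)[OF i] cspan2_0 by simp
    ultimately show "\<exists>x. x \<in> ls i \<and> x \<in> l \<and> x \<noteq> 0" by blast
  qed
  obtain p where p: "\<forall>i\<in>{1..4}. p i \<in> ls i \<and> p i \<in> l \<and> p i \<noteq> 0" using bchoice[OF ex2] by blast
  have ex3: "\<forall>i\<in>{1..4}. \<exists>y. y \<in> ls i \<and> y \<notin> l"
  proof
    fix i :: nat assume i: "i \<in> {1..4}"
    show "\<exists>y. y \<in> ls i \<and> y \<notin> l"
    proof (rule ccontr)
      assume "\<not> ?thesis"
      then have sub: "ls i \<subseteq> l" by blast
      define j where "j = (if i = 1 then 2 else (1::nat))"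
      have j: "j \<in> {1..4}" "j \<noteq> i" unfolding j_def by auto
      have "U i \<in> ls i" "V i \<in> ls i" using UV(1)[OF i] cspan2_u cspan2_v by simp_all
      then have "U i \<in> cspan2 a b" "V i \<in> cspan2 a b" using sub lab(2) by blast+
      then have sub2: "cspan2 a b \<subseteq> cspan2 (U i) (V i)" by (rule span2_sub[OF UV(2)[OF i]])
      have pj: "p j \<in> ls j" "p j \<in> l" "p j \<noteq> 0" using p j(1) by blast+
      have "p j \<in> ls i" using pj(2) sub2 lab(2) UV(1)[OF i] by blast
      then have "meets (ls i) (ls j)" unfolding meets_def using pj(1) pj(3) by blast
      moreover have "\<not> meets (ls i) (ls j)" using skew i j by auto
      ultimately show False by blast
    qed
  qed
  obtain q where q: "\<forall>i\<in>{1..4}. q i \<in> ls i \<and> q i \<notin> l" using bchoice[OF ex3] by blast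
  interpret cfg a b c d ea eb ec ed ls p q U V
  proof
    show "\<And>i. i \<in> {1..4} \<Longrightarrow> ls i = cspan2 (U i) (V i)" by (rule UV(1))
    show "\<And>i. i \<in> {1..4} \<Longrightarrow> p i \<in> ls i" using p by blast
    show "\<And>i. i \<in> {1..4} \<Longrightarrow> p i \<in> cspan2 a b" using p lab(2) by blast
    show "\<And>i. i \<in> {1..4} \<Longrightarrow> p i \<noteq> 0" using p by blast
    show "\<And>i. i \<in> {1..4} \<Longrightarrow> q i \<in> ls i" using q by blast
    show "\<And>i. i \<in> {1..4} \<Longrightarrow> q i \<notin> cspan2 a b" using q lab(2) by blast
    show "\<And>i j. i \<in> {1..4} \<Longrightarrow> j \<in> {1..4} \<Longrightarrow> i \<noteq> j \<Longrightarrow> \<not> meets (ls i) (ls j)" using skew by blast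
  qed
  have uniq: "L = cspan2 a b" if "is_line L" "\<forall>i\<in>{1..4}. meets L (ls i)" for L
    using l_unique that lab(2) by blast
  have ex: "\<exists>C. curve11 (cspan2 a b) C \<and> (\<forall>i\<in>{1..4}. C \<inter> proper_transform (cspan2 a b) (ls i) \<noteq> {})"
    by (rule exists_C) (rule uniq)
  show ?thesis unfolding lab(2)
    using ex unique_C by blast
qed


end
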